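(* Let $X,Y\subseteq\{a,b\}^*$ be disjoint finite sets of words with $1\le|X|\le|Y|$. Then there is a $2^{|X|}$-state MCQFA (with complex amplitudes) that accepts every word of $X$ with probability $0$ and every word of $Y$ with nonzero probability; i.e. $X$ and $Y$ are separated by a nondeterministic MCQFA with $2^{|X|}$ states.
   Context: An $n$-state Moore–Crutchfield quantum finite automaton (MCQFA) over a finite alphabet $\Sigma$ consists of a unitary matrix $U_\sigma\in\mathbb{C}^{n\times n}$ for each $\sigma\in\Sigma$, an initial unit vector $|u_0\rangle\in\mathbb{C}^n$ and a set of accepting basis states; on input $w=w_1\cdots w_k$ the final state is $U_{w_k}\cdots U_{w_1}|u_0\rangle$ and the acceptance probability is the sum of the squared moduli of its accepting coordinates. Disjoint sets $X,Y$ are separated by a nondeterministic MCQFA if every word of one set is accepted with nonzero probability and every word of the other with probability $0$. *)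

theory Defs
  imports Complex_Main "Jordan_Normal_Form.Matrix"
begin

datatype sym = a | b

definition adjoint_mat :: "complex mat \<Rightarrow> complex mat" where
  "adjoint_mat U = transpose_mat (map_mat cnj U)"

definition unitary_mat :: "nat \<Rightarrow> complex mat \<Rightarrow> bool" where
  "unitary_mat n U \<longleftrightarrow> U \<in> carrier_mat n n \<and> adjoint_mat U * U = 1\<^sub>m n"

definition mcqfa_state :: "(sym \<Rightarrow> complex mat) \<Rightarrow> complex vec \<Rightarrow> sym list \<Rightarrow> complex vec" where
  "mcqfa_state U u0 w = foldl (\<lambda>v \<sigma>. U \<sigma> *\<^sub>v v) u0 w"

definition acc_prob :: "(sym \<Rightarrow> complex mat) \<Rightarrow> complex vec \<Rightarrow> nat set \<Rightarrow> sym list \<Rightarrow> real" where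
  "acc_prob U u0 F w = (\<Sum>i\<in>F. (cmod (mcqfa_state U u0 w $ i))\<^sup>2)"

definition is_mcqfa :: "nat \<Rightarrow> (sym \<Rightarrow> complex mat) \<Rightarrow> complex vec \<Rightarrow> nat set \<Rightarrow> bool" where
  "is_mcqfa n U u0 F \<longleftrightarrow> (\<forall>\<sigma>. unitary_mat n (U \<sigma>)) \<and> u0 \<in> carrier_vec n
     \<and> (\<Sum>i<n. (cmod (u0 $ i))\<^sup>2) = 1 \<and> F \<subseteq> {..<n}"

end

theory Submission
  imports Defs "HOL-Computational_Algebra.Polynomial"
begin

definition Bm :: "sym \<Rightarrow> bool \<Rightarrow> bool \<Rightarrow> complex" where
 "Bm s i j = (case s of a \<Rightarrow> (if \<not>i \<and> \<not>j then 3 else if \<not>i \<and> j then 4 else if i \<and> \<not>j then 4 else -3)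
                      | b \<Rightarrow> (if \<not>i \<and> \<not>j then 3 else if \<not>i \<and> j then -4 else if i \<and> \<not>j then 4 else 3))"

fun rp :: "sym list \<Rightarrow> complex poly \<times> complex poly" where
  "rp [] = (1, 0)"
| "rp (s # w) = (smult (Bm s False False) (fst (rp w)) + smult (Bm s True False) (snd (rp w)),
                 pCons 0 (smult (Bm s False True) (fst (rp w)) + smult (Bm s True True) (snd (rp w))))"

definition Dp :: "sym list \<Rightarrow> sym list \<Rightarrow> complex poly" where
  "Dp y x = fst (rp y) * snd (rp x) - snd (rp y) * fst (rp x)"

lemma rp_snd0: "coeff (snd (rp w)) 0 = 0"
  by (cases w) auto

lemma rp_fst0: "coeff (fst (rp w)) 0 = 3 ^ length w"
  by (induction w) (auto simp: rp_snd0 Bm_def split: sym.splits)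

lemma rp_snd1: "coeff (snd (rp (s # w))) 1 = Bm s False True * 3 ^ length w"
  by (simp add: rp_snd0 rp_fst0)

lemma coeff_mult_1: "coeff (p * q) 1 = coeff p 0 * coeff q 1 + coeff p 1 * coeff q 0"
  by (simp add: coeff_mult)

lemma Bm01_nz: "Bm s False True \<noteq> 0"
  by (cases s) (auto simp: Bm_def)

lemma Dp_strip: "Dp (s # y) (s # x) = pCons 0 (smult (Bm s False False * Bm s True True - Bm s False True * Bm s True False) (Dp y x))"
proof -
  show ?thesis
    by (rule poly_eq_poly_eq_iff[THEN iffD1]) (auto simp: Dp_def algebra_simps)
qed

lemma det_nz: "Bm s False False * Bm s True True - Bm s False True * Bm s True False \<noteq> 0"
  by (cases s) (auto simp: Bm_def)

lemma Dp_nz: "x \<noteq> y \<Longrightarrow> Dp y x \<noteq> 0"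
proof (induction x arbitrary: y)
  case Nil
  then obtain t y' where y: "y = t # y'" by (cases y) auto
  have "coeff (Dp y []) 1 \<noteq> 0"
    unfolding y Dp_def using Bm01_nz[of t] by (simp add: rp_snd1 rp_snd0 rp_fst0)
  then show ?case by auto
next
  case (Cons s x)
  show ?case
  proof (cases y)
    case Nil
    have "coeff (Dp y (s # x)) 1 \<noteq> 0"
      unfolding Nil Dp_def using Bm01_nz[of s] by (simp add: rp_snd1 rp_snd0 rp_fst0)
    then show ?thesis by auto
  next
    case (Cons t y')
    show ?thesis
    proof (cases "t = s")
      case True
      with Cons \<open>s # x \<noteq> y\<close> have "x \<noteq> y'" by auto
      then have "Dp y' x \<noteq> 0" using Cons.IH by auto
      then show ?thesis using True Cons det_nz[of s] by (simp add: Dp_strip)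
    next
      case False
      have "coeff (Dp y (s # x)) 1 = 3 ^ (length x + length y') * 3 * (Bm s False True - Bm t False True)"
        unfolding Cons Dp_def coeff_diff coeff_mult_1 rp_snd1 rp_snd0 rp_fst0
        by (simp add: algebra_simps power_add)
      moreover have "Bm s False True \<noteq> Bm t False True" using False
        by (cases s; cases t) (auto simp: Bm_def)
      ultimately have "coeff (Dp y (s # x)) 1 \<noteq> 0" by simp
      then show ?thesis by auto
    qed
  qed
qed
lemma Bm_cnj: "cnj (Bm s i j) = Bm s i j"
  by (cases s) (auto simp: Bm_def)

definition A2 :: "complex \<Rightarrow> sym \<Rightarrow> bool \<Rightarrow> bool \<Rightarrow> complex" where
  "A2 z s i j = Bm s i j * (if j then z else 1) / 5"

definition mv2 :: "(bool \<Rightarrow> bool \<Rightarrow> complex) \<Rightarrow> (bool \<Rightarrow> complex) \<Rightarrow> bool \<Rightarrow> complex" where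
  "mv2 M v i = M i False * v False + M i True * v True"

definition mm2 :: "(bool \<Rightarrow> bool \<Rightarrow> complex) \<Rightarrow> (bool \<Rightarrow> bool \<Rightarrow> complex) \<Rightarrow> bool \<Rightarrow> bool \<Rightarrow> complex" where
  "mm2 M N i j = M i False * N False j + M i True * N True j"

definition Id2 :: "bool \<Rightarrow> bool \<Rightarrow> complex" where "Id2 i j = (if i = j then 1 else 0)"

definition st2 :: "(sym \<Rightarrow> bool \<Rightarrow> bool \<Rightarrow> complex) \<Rightarrow> (bool \<Rightarrow> complex) \<Rightarrow> sym list \<Rightarrow> bool \<Rightarrow> complex" where
  "st2 A g w = foldl (\<lambda>v s. mv2 (A s) v) g w"

definition Mat2 :: "(sym \<Rightarrow> bool \<Rightarrow> bool \<Rightarrow> complex) \<Rightarrow> sym list \<Rightarrow> bool \<Rightarrow> bool \<Rightarrow> complex" where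
  "Mat2 A w = foldl (\<lambda>M s. mm2 (A s) M) Id2 w"

lemma fold_mv: "foldl (\<lambda>v s. mv2 (A s) v) (mv2 M g) w = mv2 (foldl (\<lambda>M s. mm2 (A s) M) M w) g"
proof (induction w arbitrary: M)
  case Nil then show ?case by simp
next
  case (Cons s w)
  have "mv2 (A s) (mv2 M g) = mv2 (mm2 (A s) M) g"
    by (rule ext) (simp add: mv2_def mm2_def algebra_simps)
  then show ?case using Cons by simp
qed

lemma fold_mm: "foldl (\<lambda>M s. mm2 (A s) M) (mm2 N K) w = mm2 (foldl (\<lambda>M s. mm2 (A s) M) N w) K"
proof (induction w arbitrary: N)
  case Nil then show ?case by simp
next
  case (Cons s w)
  have "mm2 (A s) (mm2 N K) = mm2 (mm2 (A s) N) K"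
    by (rule ext)+ (simp add: mm2_def algebra_simps)
  then show ?case using Cons by simp
qed

lemma st_Mat: "st2 A g w = mv2 (Mat2 A w) g"
proof -
  have "g = mv2 Id2 g" by (rule ext) (simp add: mv2_def Id2_def)
  then show ?thesis unfolding st2_def Mat2_def by (metis fold_mv)
qed

lemma Mat_Cons: "Mat2 A (s # w) = mm2 (Mat2 A w) (A s)"
proof -
  have "mm2 (A s) Id2 = mm2 Id2 (A s)" by (rule ext)+ (simp add: mm2_def Id2_def)
  then show ?thesis unfolding Mat2_def by (simp add: fold_mm)
qed

lemma Mat_row: "Mat2 (A2 z) w False j = poly ((if j then snd else fst) (rp w)) z / 5 ^ length w"
proof (induction w arbitrary: j)
  case Nil then show ?case by (simp add: Mat2_def Id2_def)
next
  case (Cons s w)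
  show ?case
  proof (cases j)
    case True
    then show ?thesis unfolding Mat_Cons mm2_def Cons.IH unfolding A2_def
      by (simp add: divide_simps) (simp add: algebra_simps)
  next
    case False
    then show ?thesis unfolding Mat_Cons mm2_def Cons.IH unfolding A2_def
      by (simp add: divide_simps)
  qed
qed

lemma A2_unitary:
  assumes "cmod z = 1"
  shows "cnj (A2 z s False d) * A2 z s False d' + cnj (A2 z s True d) * A2 z s True d' = (if d = d' then 1 else 0)"
proof -
  have zz: "cnj z * z = 1"
    using assms by (metis complex_norm_square mult.commute of_real_1 power_one)
  have e: "cnj (A2 z s i d) * A2 z s i d' = Bm s i d * Bm s i d' * ((if d then cnj z else 1) * (if d' then z else 1)) / 25" for i
    unfolding A2_def by (simp add: Bm_cnj)
  have zz2: "z * cnj z = 1" using zz by (simp add: mult.commute)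
  show ?thesis unfolding e
    by (cases s; cases d; cases d') (simp_all add: Bm_def zz zz2)
qed
definition zn :: "nat \<Rightarrow> complex" where "zn n = (of_nat n + \<i>) / (of_nat n - \<i>)"

lemma zn_norm: "cmod (zn n) = 1"
proof -
  have "of_nat n - \<i> = cnj (of_nat n + \<i>)" by simp
  moreover have "of_nat n + \<i> \<noteq> 0" by (simp add: complex_eq_iff)
  ultimately have "cmod (of_nat n - \<i>) = cmod (of_nat n + \<i>)" "cmod (of_nat n + \<i>) \<noteq> 0"
    by (metis complex_mod_cnj, simp)
  then show ?thesis unfolding zn_def by (simp add: norm_divide)
qed

lemma zn_inj: "inj zn"
proof (rule injI)
  fix m n assume "zn m = zn n"
  moreover have "of_nat m - \<i> \<noteq> 0" "of_nat n - \<i> \<noteq> 0" by (simp_all add: complex_eq_iff)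
  ultimately have "(of_nat m + \<i>) * (of_nat n - \<i>) = (of_nat n + \<i>) * (of_nat m - \<i>)"
    unfolding zn_def by (simp add: field_simps)
  then have "complex_of_nat m = of_nat n" by (simp add: algebra_simps complex_eq_iff)
  then show "m = n" by simp
qed

lemma two_state:
  assumes "finite S" "x \<notin> S"
  shows "\<exists>A g. (\<forall>s d d'. cnj (A s False d) * A s False d' + cnj (A s True d) * A s True d' = (if d = d' then 1 else 0))
     \<and> (cmod (g False))\<^sup>2 + (cmod (g True))\<^sup>2 = 1 \<and> st2 A g x False = 0 \<and> (\<forall>y\<in>S. st2 A g y False \<noteq> 0)"
proof -
  define R where "R = {z. poly (fst (rp x)) z = 0} \<union> (\<Union>y\<in>S. {z. poly (Dp y x) z = 0})"
  have "fst (rp x) \<noteq> 0"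
  proof
    assume h: "fst (rp x) = 0"
    have "coeff (fst (rp x)) 0 = 0" unfolding h by (rule coeff_0)
    then show False unfolding rp_fst0 by simp
  qed
  moreover have "\<And>y. y \<in> S \<Longrightarrow> Dp y x \<noteq> 0" using assms(2) by (intro Dp_nz) auto
  ultimately have "finite R" unfolding R_def using assms(1) by (auto intro: poly_roots_finite)
  moreover have "infinite (range zn)" using zn_inj range_inj_infinite by blast
  ultimately have "\<not> range zn \<subseteq> R" using finite_subset by blast
  then obtain n where "zn n \<notin> R" by blast
  define z where "z = zn n"
  have zR: "z \<notin> R" and z1: "cmod z = 1" using \<open>zn n \<notin> R\<close> zn_norm z_def by auto
  define R0 where "R0 = Mat2 (A2 z) x False False"
  define R1 where "R1 = Mat2 (A2 z) x False True"
  have "R0 \<noteq> 0" using zR unfolding R0_def Mat_row R_def by auto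
  define nr where "nr = sqrt ((cmod R0)\<^sup>2 + (cmod R1)\<^sup>2)"
  have nrp: "nr > 0" unfolding nr_def using \<open>R0 \<noteq> 0\<close> by (simp add: add_pos_nonneg)
  define g where "g = (\<lambda>d. if d then - R0 / nr else R1 / nr)"
  have amp: "st2 (A2 z) g w False = (Mat2 (A2 z) w False False * R1 - Mat2 (A2 z) w False True * R0) / nr" for w
    unfolding st_Mat mv2_def g_def by (simp add: diff_divide_distrib)
  have "(cmod (g False))\<^sup>2 + (cmod (g True))\<^sup>2 = ((cmod R0)\<^sup>2 + (cmod R1)\<^sup>2) / nr\<^sup>2"
    unfolding g_def by (simp add: norm_divide power_divide norm_minus_cancel add_divide_distrib)
  also have "\<dots> = 1" using nrp \<open>R0 \<noteq> 0\<close> unfolding nr_def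
    by (simp add: add_nonneg_nonneg)
  finally have gn: "(cmod (g False))\<^sup>2 + (cmod (g True))\<^sup>2 = 1" .
  have "st2 (A2 z) g x False = 0" unfolding amp R0_def R1_def by simp
  moreover have "st2 (A2 z) g y False \<noteq> 0" if "y \<in> S" for y
  proof -
    have "poly (Dp y x) z \<noteq> 0" using zR that unfolding R_def by auto
    have "Mat2 (A2 z) y False False * R1 - Mat2 (A2 z) y False True * R0 = poly (Dp y x) z / (5 ^ length y * 5 ^ length x)"
      unfolding R0_def R1_def Mat_row Dp_def poly_diff poly_mult if_False if_True by (simp add: diff_divide_distrib)
    then have "Mat2 (A2 z) y False False * R1 - Mat2 (A2 z) y False True * R0 \<noteq> 0"
      using \<open>poly (Dp y x) z \<noteq> 0\<close> by simp
    then show ?thesis unfolding amp using nrp by simp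
  qed
  ultimately show ?thesis using gn A2_unitary[OF z1] by blast
qed

lemma sum_prod_bits:
  fixes h :: "nat \<Rightarrow> bool \<Rightarrow> 'a::comm_semiring_1"
  shows "(\<Sum>i<(2::nat)^k. \<Prod>j<k. h j (bit i j)) = (\<Prod>j<k. h j False + h j True)"
proof (induction k arbitrary: h)
  case 0 then show ?case by simp
next
  case (Suc k)
  define m where "m = 2 ^ k - (1::nat)"
  have m: "2 ^ k = Suc m" unfolding m_def by simp
  have set1: "{..<(2::nat) ^ Suc k} = {..Suc (2 * m)}" using m by auto
  have set2: "{..m} = {..<(2::nat) ^ k}" using m by auto
  define G where "G i = (\<Prod>j<Suc k. h j (bit i j))" for i :: nat
  have G: "G (2 * i) + G (Suc (2 * i)) = (h 0 False + h 0 True) * (\<Prod>j<k. h (Suc j) (bit i j))" for i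
    unfolding G_def prod.lessThan_Suc_shift by (simp add: bit_Suc bit_0 algebra_simps)
  have "(\<Sum>i<(2::nat)^Suc k. \<Prod>j<Suc k. h j (bit i j)) = (\<Sum>i\<le>Suc (2*m). G i)"
    unfolding set1 G_def ..
  also have "\<dots> = (\<Sum>i\<le>m. G (2*i) + G (Suc (2*i)))" by (rule sum.in_pairs_0)
  also have "\<dots> = (h 0 False + h 0 True) * (\<Sum>i<(2::nat)^k. \<Prod>j<k. h (Suc j) (bit i j))"
    unfolding G set2 by (simp add: sum_distrib_left)
  also have "\<dots> = (\<Prod>j<Suc k. h j False + h j True)"
    unfolding prod.lessThan_Suc_shift using Suc.IH[of "\<lambda>j. h (Suc j)"] by simp
  finally show ?case .
qed

lemma bits_eq:
  "(i::nat) < 2 ^ k \<Longrightarrow> i' < 2 ^ k \<Longrightarrow> (\<forall>j<k. bit i j = bit i' j) \<Longrightarrow> i = i'"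
proof (induction k arbitrary: i i')
  case 0 then show ?case by simp
next
  case (Suc k)
  have "i div 2 < 2 ^ k" "i' div 2 < 2 ^ k" using Suc.prems by auto
  moreover have "\<forall>j<k. bit (i div 2) j = bit (i' div 2) j"
    using Suc.prems(3) by (auto simp: bit_Suc[symmetric])
  ultimately have "i div 2 = i' div 2" using Suc.IH by blast
  moreover have "odd i = odd i'" using Suc.prems(3) by (auto simp: bit_0[symmetric])
  ultimately show ?case by (metis div_mult_mod_eq odd_iff_mod_2_eq_one mod2_eq_if)
qed

definition UU :: "nat \<Rightarrow> (nat \<Rightarrow> sym \<Rightarrow> bool \<Rightarrow> bool \<Rightarrow> complex) \<Rightarrow> sym \<Rightarrow> complex mat" where
  "UU k A s = mat (2^k) (2^k) (\<lambda>(i,l). \<Prod>j<k. A j s (bit i j) (bit l j))"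

definition UV :: "nat \<Rightarrow> (nat \<Rightarrow> bool \<Rightarrow> complex) \<Rightarrow> complex vec" where
  "UV k g = vec (2^k) (\<lambda>i. \<Prod>j<k. g j (bit i j))"

lemma sum_lessThan_vec: "(\<Sum>l\<in>{0..<n::nat}. f l) = (\<Sum>l<n. f l)"
  by (simp add: atLeast0LessThan)

lemma UU_state:
  "mcqfa_state (UU k A) (UV k g) w = vec (2^k) (\<lambda>i. \<Prod>j<k. st2 (A j) (g j) w (bit i j))"
proof (induction w rule: rev_induct)
  case Nil
  show ?case unfolding mcqfa_state_def UV_def st2_def by simp
next
  case (snoc s w)
  have "mcqfa_state (UU k A) (UV k g) (w @ [s]) = UU k A s *\<^sub>v mcqfa_state (UU k A) (UV k g) w"
    unfolding mcqfa_state_def by simp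
  also have "\<dots> = vec (2^k) (\<lambda>i. \<Prod>j<k. st2 (A j) (g j) (w @ [s]) (bit i j))"
  proof (rule eq_vecI)
    show "dim_vec (UU k A s *\<^sub>v mcqfa_state (UU k A) (UV k g) w) = dim_vec (vec (2^k) (\<lambda>i. \<Prod>j<k. st2 (A j) (g j) (w @ [s]) (bit i j)))"
      by (simp add: UU_def)
    fix i assume "i < dim_vec (vec (2^k) (\<lambda>i. \<Prod>j<k. st2 (A j) (g j) (w @ [s]) (bit i j)))"
    then have i: "i < 2^k" by simp
    have "(UU k A s *\<^sub>v mcqfa_state (UU k A) (UV k g) w) $ i
        = (\<Sum>l<(2::nat)^k. (\<Prod>j<k. A j s (bit i j) (bit l j)) * (\<Prod>j<k. st2 (A j) (g j) w (bit l j)))"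
      using i unfolding snoc by (simp add: UU_def scalar_prod_def sum_lessThan_vec)
    also have "\<dots> = (\<Sum>l<(2::nat)^k. \<Prod>j<k. A j s (bit i j) (bit l j) * st2 (A j) (g j) w (bit l j))"
      by (simp add: prod.distrib)
    also have "\<dots> = (\<Prod>j<k. A j s (bit i j) False * st2 (A j) (g j) w False + A j s (bit i j) True * st2 (A j) (g j) w True)"
      by (rule sum_prod_bits)
    also have "\<dots> = (\<Prod>j<k. st2 (A j) (g j) (w @ [s]) (bit i j))"
      by (simp add: st2_def mv2_def)
    finally show "(UU k A s *\<^sub>v mcqfa_state (UU k A) (UV k g) w) $ i = vec (2^k) (\<lambda>i. \<Prod>j<k. st2 (A j) (g j) (w @ [s]) (bit i j)) $ i"
      using i by simp
  qed
  finally show ?case .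
qed

lemma UU_unitary:
  assumes "\<And>j. j < k \<Longrightarrow> \<forall>d d'. cnj (A j s False d) * A j s False d' + cnj (A j s True d) * A j s True d' = (if d = d' then 1 else 0)"
  shows "unitary_mat (2^k) (UU k A s)"
  unfolding unitary_mat_def
proof
  show "UU k A s \<in> carrier_mat (2^k) (2^k)" by (simp add: UU_def)
  show "adjoint_mat (UU k A s) * UU k A s = 1\<^sub>m (2^k)"
  proof (rule eq_matI)
    fix i i' assume "i < dim_row (1\<^sub>m (2^k) :: complex mat)" "i' < dim_col (1\<^sub>m (2^k) :: complex mat)"
    then have i: "i < 2^k" and i': "i' < 2^k" by auto
    have "(adjoint_mat (UU k A s) * UU k A s) $$ (i, i')
        = (\<Sum>l<(2::nat)^k. cnj (\<Prod>j<k. A j s (bit l j) (bit i j)) * (\<Prod>j<k. A j s (bit l j) (bit i' j)))"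
      using i i' by (simp add: adjoint_mat_def UU_def scalar_prod_def sum_lessThan_vec)
    also have "\<dots> = (\<Sum>l<(2::nat)^k. \<Prod>j<k. cnj (A j s (bit l j) (bit i j)) * A j s (bit l j) (bit i' j))"
      by (simp add: prod.distrib)
    also have "\<dots> = (\<Prod>j<k. cnj (A j s False (bit i j)) * A j s False (bit i' j) + cnj (A j s True (bit i j)) * A j s True (bit i' j))"
      by (rule sum_prod_bits[where h = "\<lambda>j c. cnj (A j s c (bit i j)) * A j s c (bit i' j)"])
    also have "\<dots> = (\<Prod>j<k. if bit i j = bit i' j then 1 else 0)"
      using assms by (intro prod.cong) auto
    also have "\<dots> = (if i = i' then 1 else 0)"
    proof (cases "i = i'")
      case True then show ?thesis by simp
    next
      case False
      then obtain j where "j < k" "bit i j \<noteq> bit i' j" using bits_eq[OF i i'] by blast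
      then show ?thesis using False by (auto intro: prod_zero)
    qed
    also have "\<dots> = 1\<^sub>m (2^k) $$ (i, i')" using i i' by simp
    finally show "(adjoint_mat (UU k A s) * UU k A s) $$ (i, i') = 1\<^sub>m (2^k) $$ (i, i')" .
  qed (simp_all add: adjoint_mat_def UU_def)
qed

lemma UV_norm:
  assumes "\<And>j. j < k \<Longrightarrow> (cmod (g j False))\<^sup>2 + (cmod (g j True))\<^sup>2 = 1"
  shows "(\<Sum>i<(2::nat)^k. (cmod (UV k g $ i))\<^sup>2) = 1"
proof -
  have "(\<Sum>i<(2::nat)^k. (cmod (UV k g $ i))\<^sup>2) = (\<Sum>i<(2::nat)^k. \<Prod>j<k. (cmod (g j (bit i j)))\<^sup>2)"
    by (intro sum.cong) (auto simp: UV_def prod_norm[symmetric] prod_power_distrib)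
  also have "\<dots> = (\<Prod>j<k. (cmod (g j False))\<^sup>2 + (cmod (g j True))\<^sup>2)"
    by (rule sum_prod_bits)
  also have "\<dots> = 1" using assms by simp
  finally show ?thesis .
qed

lemma UU_acc:
  "acc_prob (UU k A) (UV k g) {0} w = (cmod (\<Prod>j<k. st2 (A j) (g j) w False))\<^sup>2"
  unfolding acc_prob_def UU_state by simp

theorem mainTheorem15:
  fixes X Y :: "sym list set"
  assumes "finite X" and "finite Y" and "X \<inter> Y = {}"
    and "1 \<le> card X" and "card X \<le> card Y"
  shows "\<exists>U u0 F. is_mcqfa (2 ^ card X) U u0 F
           \<and> (\<forall>w\<in>X. acc_prob U u0 F w = 0)
           \<and> (\<forall>w\<in>Y. acc_prob U u0 F w \<noteq> 0)"
proof -
  define k where "k = card X"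
  obtain h where h: "bij_betw h {0..<k} X" using ex_bij_betw_nat_finite[OF assms(1)] k_def by blast
  have "\<forall>j\<in>{0..<k}. \<exists>p. (\<forall>s d d'. cnj (fst p s False d) * fst p s False d' + cnj (fst p s True d) * fst p s True d' = (if d = d' then 1 else 0))
     \<and> (cmod (snd p False))\<^sup>2 + (cmod (snd p True))\<^sup>2 = 1 \<and> st2 (fst p) (snd p) (h j) False = 0 \<and> (\<forall>y\<in>Y. st2 (fst p) (snd p) y False \<noteq> 0)"
  proof
    fix j assume "j \<in> {0..<k}"
    then have "h j \<in> X" using h bij_betwE by blast
    then have "h j \<notin> Y" using assms(3) by blast
    from two_state[OF assms(2) this] obtain A0 g0 where "(\<forall>s d d'. cnj (A0 s False d) * A0 s False d' + cnj (A0 s True d) * A0 s True d' = (if d = d' then 1 else 0))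
     \<and> (cmod (g0 False))\<^sup>2 + (cmod (g0 True))\<^sup>2 = 1 \<and> st2 A0 g0 (h j) False = 0 \<and> (\<forall>y\<in>Y. st2 A0 g0 y False \<noteq> 0)" by blast
    then show "\<exists>p. (\<forall>s d d'. cnj (fst p s False d) * fst p s False d' + cnj (fst p s True d) * fst p s True d' = (if d = d' then 1 else 0))
     \<and> (cmod (snd p False))\<^sup>2 + (cmod (snd p True))\<^sup>2 = 1 \<and> st2 (fst p) (snd p) (h j) False = 0 \<and> (\<forall>y\<in>Y. st2 (fst p) (snd p) y False \<noteq> 0)"
      by (intro exI[of _ "(A0, g0)"]) simp
  qed
  from bchoice[OF this] obtain p where p0: "\<forall>j\<in>{0..<k}. (\<forall>s d d'. cnj (fst (p j) s False d) * fst (p j) s False d' + cnj (fst (p j) s True d) * fst (p j) s True d' = (if d = d' then 1 else 0))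
     \<and> (cmod (snd (p j) False))\<^sup>2 + (cmod (snd (p j) True))\<^sup>2 = 1 \<and> st2 (fst (p j)) (snd (p j)) (h j) False = 0 \<and> (\<forall>y\<in>Y. st2 (fst (p j)) (snd (p j)) y False \<noteq> 0)"
    by blast
  note p = p0[rule_format]
  define A where "A j = fst (p j)" for j
  define g where "g j = snd (p j)" for j
  have "is_mcqfa (2 ^ k) (UU k A) (UV k g) {0}"
    unfolding is_mcqfa_def
  proof (intro conjI allI)
    fix s show "unitary_mat (2^k) (UU k A s)"
      by (rule UU_unitary) (use p in \<open>auto simp: A_def\<close>)
  next
    show "UV k g \<in> carrier_vec (2^k)" by (simp add: UV_def)
  next
    show "(\<Sum>i<(2::nat)^k. (cmod (UV k g $ i))\<^sup>2) = 1"
      by (rule UV_norm) (use p in \<open>auto simp: g_def\<close>)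
  qed auto
  moreover have "acc_prob (UU k A) (UV k g) {0} w = 0" if "w \<in> X" for w
  proof -
    have "w \<in> h ` {0..<k}" using h that bij_betw_imp_surj_on by blast
    then obtain j where j: "j \<in> {0..<k}" "w = h j" by blast
    have "st2 (A j) (g j) w False = 0" using p[OF j(1)] unfolding A_def g_def j(2) by blast
    moreover have "j \<in> {..<k}" using j(1) by simp
    ultimately have "(\<Prod>j<k. st2 (A j) (g j) w False) = 0"
      by (intro prod_zero) blast+
    then show ?thesis by (simp add: UU_acc)
  qed
  moreover have "acc_prob (UU k A) (UV k g) {0} w \<noteq> 0" if "w \<in> Y" for w
  proof -
    have "\<forall>j\<in>{..<k}. st2 (A j) (g j) w False \<noteq> 0"
      using p that unfolding A_def g_def by auto
    then have "(\<Prod>j<k. st2 (A j) (g j) w False) \<noteq> 0"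
      by (subst prod_zero_iff) auto
    then show ?thesis by (simp add: UU_acc)
  qed
  ultimately show ?thesis unfolding k_def by blast
qed

end
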